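(* Let $A$ be an $n\times m$ real matrix with $n\ge 2$ and $m\geq2$, and suppose that for some $k$ the $k$th column of $A$ has exactly one nonzero entry. Let $\tilde A$ be the $n\times(m-1)$ matrix obtained from $A$ by deleting its $k$th column. Then $G^{[2]}_{\tilde A,\tilde A^t}$ is odd$^*$ (respectively odd, respectively steady) if and only if $G^{[2]}_{A,A^t}$ is odd$^*$ (respectively odd, respectively steady).
   Context: DSR graphs: for $P\in\mathbb{R}^{n\times m}$, $Q\in\mathbb{R}^{m\times n}$, $G_{P,Q}$ is the signed, labelled bipartite digraph with S-vertices $S_1,\dots,S_n$ and R-vertices $R_1,\dots,R_m$, with an arc $R_j\to S_i$ of sign $\mathrm{sign}(P_{ij})$ iff $P_{ij}\ne0$ and an arc $S_i\to R_j$ of sign $\mathrm{sign}(Q_{ji})$ iff $Q_{ji}\ne0$; antiparallel arcs of equal sign are merged into a single undirected edge. An edge arising from $P_{ij}\ne0$ (R-to-S or undirected) has label $|P_{ij}|$; an edge with only S-to-R orientation has label $\infty$. Walks traverse edges consistently with orientation; a cycle is a nonempty closed walk repeating no vertex except first$=$last. The parity of a cycle $W$ is $(-1)^{|W|/2}\mathrm{sign}(W)$ ($|W|$ = length, $\mathrm{sign}(W)$ = product of edge signs); e-cycles have parity $1$. A cycle $(e_1,\dots,e_{2r})$ is an s-cycle if all labels are finite and $\prod l(e_{2i-1})=\prod l(e_{2i})$. Two cycles have odd intersection if they can be oriented so as to induce the same direction on every common edge and each connected component of their intersection has odd length. A DSR graph is odd if it has no e-cycles; odd$^*$ if all e-cycles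 are s-cycles and no two e-cycles have odd intersection; steady if all cycles are s-cycles. DSR$^{[2]}$ graph: for $A\in\mathbb{R}^{n\times m}$, $B\in\mathbb{R}^{m\times n}$, $n\ge2$, let $\overline{\mathbf L}^A\in\mathbb{R}^{\binom n2\times mn}$ (rows $(i,j)$, $i<j$; columns $(k,l)$, $1\le k\le m$, $1\le l\le n$) have entries $A_{jk}$ if $l=i$, $-A_{ik}$ if $l=j$, $0$ otherwise, and $\underline{\mathbf L}^B\in\mathbb{R}^{mn\times\binom n2}$ have $(k,l),(i,j)$ entry $B_{kj}$ if $l=i$, $-B_{ki}$ if $l=j$, $0$ otherwise. Then $G^{[2]}_{A,B}:=G_{\overline{\mathbf L}^A,\underline{\mathbf L}^B}$. *)

theory Defs
  imports Main "HOL-Library.Extended_Real"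
begin

text \<open>A DSR graph G_{P,Q} with S-vertices indexed by SI and R-vertices indexed by RI.
  P s r plays the role of P_{sr} (arc R_r -> S_s), Q r s the role of Q_{rs} (arc S_s -> R_r).\<close>

datatype ('a, 'b) vtx = SV 'a | RV 'b

text \<open>Edges between S_s and R_r: UE = merged undirected edge, RSA = arc R_r -> S_s only,
  SRA = arc S_s -> R_r only.\<close>
datatype ('a, 'b) edge = UE 'a 'b | RSA 'a 'b | SRA 'a 'b

definition dsr_edges ::
  "'a set \<Rightarrow> 'b set \<Rightarrow> ('a \<Rightarrow> 'b \<Rightarrow> real) \<Rightarrow> ('b \<Rightarrow> 'a \<Rightarrow> real) \<Rightarrow> ('a, 'b) edge set" where
  "dsr_edges SI RI P Q =
     {UE s r | s r. s \<in> SI \<and> r \<in> RI \<and> P s r \<noteq> 0 \<and> Q r s \<noteq> 0 \<and> sgn (P s r) = sgn (Q r s)}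
   \<union> {RSA s r | s r. s \<in> SI \<and> r \<in> RI \<and> P s r \<noteq> 0 \<and> \<not> (Q r s \<noteq> 0 \<and> sgn (P s r) = sgn (Q r s))}
   \<union> {SRA s r | s r. s \<in> SI \<and> r \<in> RI \<and> Q r s \<noteq> 0 \<and> \<not> (P s r \<noteq> 0 \<and> sgn (P s r) = sgn (Q r s))}"

fun edge_sign :: "('a \<Rightarrow> 'b \<Rightarrow> real) \<Rightarrow> ('b \<Rightarrow> 'a \<Rightarrow> real) \<Rightarrow> ('a, 'b) edge \<Rightarrow> real" where
  "edge_sign P Q (UE s r) = sgn (P s r)"
| "edge_sign P Q (RSA s r) = sgn (P s r)"
| "edge_sign P Q (SRA s r) = sgn (Q r s)"

fun edge_label :: "('a \<Rightarrow> 'b \<Rightarrow> real) \<Rightarrow> ('a, 'b) edge \<Rightarrow> ereal" where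
  "edge_label P (UE s r) = ereal \<bar>P s r\<bar>"
| "edge_label P (RSA s r) = ereal \<bar>P s r\<bar>"
| "edge_label P (SRA s r) = \<infinity>"

fun traverses :: "('a, 'b) edge \<Rightarrow> ('a, 'b) vtx \<Rightarrow> ('a, 'b) vtx \<Rightarrow> bool" where
  "traverses (UE s r) u v = ((u = SV s \<and> v = RV r) \<or> (u = RV r \<and> v = SV s))"
| "traverses (RSA s r) u v = (u = RV r \<and> v = SV s)"
| "traverses (SRA s r) u v = (u = SV s \<and> v = RV r)"

fun edge_ends :: "('a, 'b) edge \<Rightarrow> ('a, 'b) vtx set" where
  "edge_ends (UE s r) = {SV s, RV r}"
| "edge_ends (RSA s r) = {SV s, RV r}"
| "edge_ends (SRA s r) = {SV s, RV r}"

definition dsr_cycle ::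
  "'a set \<Rightarrow> 'b set \<Rightarrow> ('a \<Rightarrow> 'b \<Rightarrow> real) \<Rightarrow> ('b \<Rightarrow> 'a \<Rightarrow> real)
   \<Rightarrow> ('a, 'b) vtx list \<Rightarrow> ('a, 'b) edge list \<Rightarrow> bool" where
  "dsr_cycle SI RI P Q vs es \<longleftrightarrow>
     vs \<noteq> [] \<and> length es = length vs \<and> distinct vs \<and> distinct es \<and>
     set es \<subseteq> dsr_edges SI RI P Q \<and>
     (\<forall>k < length es. traverses (es ! k) (vs ! k) (vs ! ((k + 1) mod length vs)))"

definition cycle_parity :: "('a \<Rightarrow> 'b \<Rightarrow> real) \<Rightarrow> ('b \<Rightarrow> 'a \<Rightarrow> real) \<Rightarrow> ('a, 'b) edge list \<Rightarrow> real" where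
  "cycle_parity P Q es = (-1) ^ (length es div 2) * prod_list (map (edge_sign P Q) es)"

definition e_cycle ::
  "'a set \<Rightarrow> 'b set \<Rightarrow> ('a \<Rightarrow> 'b \<Rightarrow> real) \<Rightarrow> ('b \<Rightarrow> 'a \<Rightarrow> real)
   \<Rightarrow> ('a, 'b) vtx list \<Rightarrow> ('a, 'b) edge list \<Rightarrow> bool" where
  "e_cycle SI RI P Q vs es \<longleftrightarrow> dsr_cycle SI RI P Q vs es \<and> cycle_parity P Q es = 1"

text \<open>s-cycle (es = [e_1,...,e_{2r}], 0-based positions: even positions = e_1,e_3,...).\<close>
definition s_cycle :: "('a \<Rightarrow> 'b \<Rightarrow> real) \<Rightarrow> ('a, 'b) edge list \<Rightarrow> bool" where
  "s_cycle P es \<longleftrightarrow>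
     (\<forall>e \<in> set es. edge_label P e \<noteq> \<infinity>) \<and>
     (\<Prod>k \<in> {k. k < length es \<and> even k}. edge_label P (es ! k)) =
     (\<Prod>k \<in> {k. k < length es \<and> odd k}. edge_label P (es ! k))"

definition cycle_dirs ::
  "('a, 'b) vtx list \<Rightarrow> ('a, 'b) edge list \<Rightarrow> (('a, 'b) edge \<times> ('a, 'b) vtx \<times> ('a, 'b) vtx) set" where
  "cycle_dirs vs es = {(es ! k, vs ! k, vs ! ((k + 1) mod length vs)) | k. k < length es}"

text \<open>Adjacency of common edges (sharing an endpoint); components of the intersection
  are the classes of its reflexive-transitive closure.\<close>
definition common_adj :: "('a, 'b) edge set \<Rightarrow> (('a, 'b) edge \<times> ('a, 'b) edge) set" where
  "common_adj C = {(e, f). e \<in> C \<and> f \<in> C \<and> edge_ends e \<inter> edge_ends f \<noteq> {}}"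

definition odd_intersection ::
  "('a, 'b) vtx list \<Rightarrow> ('a, 'b) edge list \<Rightarrow> ('a, 'b) vtx list \<Rightarrow> ('a, 'b) edge list \<Rightarrow> bool" where
  "odd_intersection vs1 es1 vs2 es2 \<longleftrightarrow>
     (let C = set es1 \<inter> set es2 in
        C \<noteq> {} \<and>
        ((\<forall>e \<in> C. \<forall>u v. (e, u, v) \<in> cycle_dirs vs1 es1 \<longrightarrow> (e, u, v) \<in> cycle_dirs vs2 es2) \<or>
         (\<forall>e \<in> C. \<forall>u v. (e, u, v) \<in> cycle_dirs vs1 es1 \<longrightarrow> (e, v, u) \<in> cycle_dirs vs2 es2)) \<and>
        (\<forall>e \<in> C. odd (card {f. (e, f) \<in> (common_adj C)\<^sup>*})))"

definition dsr_odd :: "'a set \<Rightarrow> 'b set \<Rightarrow> ('a \<Rightarrow> 'b \<Rightarrow> real) \<Rightarrow> ('b \<Rightarrow> 'a \<Rightarrow> real) \<Rightarrow> bool" where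
  "dsr_odd SI RI P Q \<longleftrightarrow> (\<forall>vs es. \<not> e_cycle SI RI P Q vs es)"

definition dsr_odd_star :: "'a set \<Rightarrow> 'b set \<Rightarrow> ('a \<Rightarrow> 'b \<Rightarrow> real) \<Rightarrow> ('b \<Rightarrow> 'a \<Rightarrow> real) \<Rightarrow> bool" where
  "dsr_odd_star SI RI P Q \<longleftrightarrow>
     (\<forall>vs es. e_cycle SI RI P Q vs es \<longrightarrow> s_cycle P es) \<and>
     (\<forall>vs1 es1 vs2 es2. e_cycle SI RI P Q vs1 es1 \<and> e_cycle SI RI P Q vs2 es2
        \<longrightarrow> \<not> odd_intersection vs1 es1 vs2 es2)"

definition dsr_steady :: "'a set \<Rightarrow> 'b set \<Rightarrow> ('a \<Rightarrow> 'b \<Rightarrow> real) \<Rightarrow> ('b \<Rightarrow> 'a \<Rightarrow> real) \<Rightarrow> bool" where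
  "dsr_steady SI RI P Q \<longleftrightarrow> (\<forall>vs es. dsr_cycle SI RI P Q vs es \<longrightarrow> s_cycle P es)"

text \<open>Matrices are functions nat => nat => real, with 0-based indices; A is n x m.
  Row indices of L-bar^A are pairs (i,j), i<j<n; column indices are (k,l), k<m, l<n.\<close>

definition S2 :: "nat \<Rightarrow> (nat \<times> nat) set" where
  "S2 n = {(i, j). i < j \<and> j < n}"

definition R2 :: "nat \<Rightarrow> nat \<Rightarrow> (nat \<times> nat) set" where
  "R2 n m = {..<m} \<times> {..<n}"

definition Lupper :: "(nat \<Rightarrow> nat \<Rightarrow> real) \<Rightarrow> nat \<times> nat \<Rightarrow> nat \<times> nat \<Rightarrow> real" where
  "Lupper A = (\<lambda>(i, j) (k, l). if l = i then A j k else if l = j then - A i k else 0)"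

definition Llower :: "(nat \<Rightarrow> nat \<Rightarrow> real) \<Rightarrow> nat \<times> nat \<Rightarrow> nat \<times> nat \<Rightarrow> real" where
  "Llower B = (\<lambda>(k, l) (i, j). if l = i then B k j else if l = j then - B k i else 0)"

definition mtranspose :: "(nat \<Rightarrow> nat \<Rightarrow> real) \<Rightarrow> nat \<Rightarrow> nat \<Rightarrow> real" where
  "mtranspose A = (\<lambda>i j. A j i)"

definition del_col :: "nat \<Rightarrow> (nat \<Rightarrow> nat \<Rightarrow> real) \<Rightarrow> nat \<Rightarrow> nat \<Rightarrow> real" where
  "del_col k A = (\<lambda>i j. A i (if j < k then j else Suc j))"

definition dsr2_odd :: "nat \<Rightarrow> nat \<Rightarrow> (nat \<Rightarrow> nat \<Rightarrow> real) \<Rightarrow> (nat \<Rightarrow> nat \<Rightarrow> real) \<Rightarrow> bool" where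
  "dsr2_odd n m A B = dsr_odd (S2 n) (R2 n m) (Lupper A) (Llower B)"

definition dsr2_odd_star :: "nat \<Rightarrow> nat \<Rightarrow> (nat \<Rightarrow> nat \<Rightarrow> real) \<Rightarrow> (nat \<Rightarrow> nat \<Rightarrow> real) \<Rightarrow> bool" where
  "dsr2_odd_star n m A B = dsr_odd_star (S2 n) (R2 n m) (Lupper A) (Llower B)"

definition dsr2_steady :: "nat \<Rightarrow> nat \<Rightarrow> (nat \<Rightarrow> nat \<Rightarrow> real) \<Rightarrow> (nat \<Rightarrow> nat \<Rightarrow> real) \<Rightarrow> bool" where
  "dsr2_steady n m A B = dsr_steady (S2 n) (R2 n m) (Lupper A) (Llower B)"

end

theory Submission
  imports Defs
begin

fun mv :: "('b \<Rightarrow> 'c) \<Rightarrow> ('a,'b) vtx \<Rightarrow> ('a,'c) vtx" where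
  "mv g (SV s) = SV s" | "mv g (RV r) = RV (g r)"

fun me :: "('b \<Rightarrow> 'c) \<Rightarrow> ('a,'b) edge \<Rightarrow> ('a,'c) edge" where
  "me g (UE s r) = UE s (g r)" | "me g (RSA s r) = RSA s (g r)" | "me g (SRA s r) = SRA s (g r)"

lemma inj_mv: "inj g \<Longrightarrow> inj (mv g)"
  unfolding inj_def
  apply (intro allI)
  subgoal for x y by (cases x; cases y) (auto)
  done

lemma inj_me: "inj g \<Longrightarrow> inj (me g)"
  unfolding inj_def
  apply (intro allI)
  subgoal for x y by (cases x; cases y) (auto)
  done

lemma trav_me: "inj g \<Longrightarrow> traverses (me g e) (mv g u) (mv g v) \<longleftrightarrow> traverses e u v"
  by (cases e; cases u; cases v) (auto dest: injD)

lemma ends_me: "edge_ends (me g e) = mv g ` edge_ends e"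
  by (cases e) auto


lemma rtrancl_img:
  assumes "inj h"
  shows "(h a, y) \<in> (map_prod h h ` R)\<^sup>* \<longleftrightarrow> (\<exists>b. y = h b \<and> (a, b) \<in> R\<^sup>*)"
proof
  assume "(h a, y) \<in> (map_prod h h ` R)\<^sup>*"
  then show "\<exists>b. y = h b \<and> (a, b) \<in> R\<^sup>*"
  proof (induction rule: rtrancl_induct)
    case base then show ?case by auto
  next
    case (step y z)
    then obtain b where b: "y = h b" "(a,b) \<in> R\<^sup>*" by auto
    from step(2) obtain x w where xw: "(x,w) \<in> R" "y = h x" "z = h w" by auto
    with b assms have "x = b" by (auto dest: injD)
    with xw b show ?case by (auto intro: rtrancl_into_rtrancl)
  qed
next
  assume "\<exists>b. y = h b \<and> (a, b) \<in> R\<^sup>*"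
  then obtain b where b: "y = h b" "(a,b) \<in> R\<^sup>*" by auto
  from b(2) have "(h a, h b) \<in> (map_prod h h ` R)\<^sup>*"
  proof (induction rule: rtrancl_induct)
    case base then show ?case by auto
  next
    case (step y z)
    then have "(h y, h z) \<in> map_prod h h ` R" by force
    with step show ?case by (meson rtrancl.rtrancl_into_rtrancl)
  qed
  with b show "(h a, y) \<in> (map_prod h h ` R)\<^sup>*" by simp
qed

lemma trav_img: "traverses e (mv g u) (mv g v) \<Longrightarrow> \<exists>x. e = me g x"
  by (cases e; cases u; cases v) (auto intro: me.simps[symmetric])

lemma dirs_map:
  assumes "length vs = length es"
  shows "cycle_dirs (map (mv g) vs) (map (me g) es)
     = (\<lambda>(e,u,v). (me g e, mv g u, mv g v)) ` cycle_dirs vs es"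
proof -
  have "(k + 1) mod length vs < length vs" if "k < length es" for k
  proof -
    have "0 < length vs" using that assms by linarith
    then show ?thesis by simp
  qed
  note ml = this
  have "cycle_dirs (map (mv g) vs) (map (me g) es) = (\<lambda>k. ((\<lambda>(e,u,v). (me g e, mv g u, mv g v)) (es!k, vs!k, vs!((k+1) mod length vs)))) ` {k. k < length es}"
    unfolding cycle_dirs_def setcompr_eq_image using ml assms
    by (intro image_cong) (auto simp: nth_map)
  also have "\<dots> = (\<lambda>(e,u,v). (me g e, mv g u, mv g v)) ` cycle_dirs vs es"
    unfolding cycle_dirs_def setcompr_eq_image image_image ..
  finally show ?thesis .
qed

lemma adj_map:
  assumes "inj g"
  shows "common_adj (me g ` C) = map_prod (me g) (me g) ` common_adj C"
proof -
  have "(mv g ` X \<inter> mv g ` Y \<noteq> {}) = (X \<inter> Y \<noteq> {})" for X Y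
    using image_Int[OF inj_mv[OF assms], of X Y] by auto
  note e = this
  show ?thesis
  proof (rule set_eqI, rule iffI)
    fix p assume "p \<in> common_adj (me g ` C)"
    then obtain x y where xy: "p = (x,y)" "x \<in> me g ` C" "y \<in> me g ` C" "edge_ends x \<inter> edge_ends y \<noteq> {}"
      unfolding common_adj_def by auto
    then obtain a b where ab0: "x = me g a" "a \<in> C" "y = me g b" "b \<in> C" by auto
    have ab: "p = (me g a, me g b)" "a \<in> C" "b \<in> C"
      "mv g ` edge_ends a \<inter> mv g ` edge_ends b \<noteq> {}"
      using xy ab0 by (auto simp: ends_me)
    then have "(a,b) \<in> common_adj C" using e unfolding common_adj_def by auto
    then show "p \<in> map_prod (me g) (me g) ` common_adj C" using ab by force
  next
    fix p assume "p \<in> map_prod (me g) (me g) ` common_adj C"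
    then obtain a b where ab: "p = (me g a, me g b)" "a \<in> C" "b \<in> C"
      "edge_ends a \<inter> edge_ends b \<noteq> {}"
      unfolding common_adj_def by auto
    then show "p \<in> common_adj (me g ` C)" using e unfolding common_adj_def by (auto simp: ends_me)
  qed
qed

lemma oi_map:
  assumes inj: "inj g" and l: "length vs1 = length es1" "length vs2 = length es2"
  shows "odd_intersection (map (mv g) vs1) (map (me g) es1) (map (mv g) vs2) (map (me g) es2)
     \<longleftrightarrow> odd_intersection vs1 es1 vs2 es2"
proof -
  let ?C = "set es1 \<inter> set es2"
  have C: "set (map (me g) es1) \<inter> set (map (me g) es2) = me g ` ?C"
    using image_Int[OF inj_me[OF inj], of "set es1" "set es2"] by simp
  have ie: "inj (me g)" and iv: "inj (mv g)" using inj_me inj_mv inj by auto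
  let ?F = "(\<lambda>(e,u,v). (me g e, mv g u, mv g v))"
  have mem: "(me g e, u, v) \<in> ?F ` D \<longleftrightarrow> (\<exists>u' v'. u = mv g u' \<and> v = mv g v' \<and> (e,u',v') \<in> D)" for e u v D
  proof
    assume "(me g e, u, v) \<in> ?F ` D"
    then obtain x where "x \<in> D" "(me g e, u, v) = ?F x" by blast
    then show "\<exists>u' v'. u = mv g u' \<and> v = mv g v' \<and> (e,u',v') \<in> D"
      using ie by (cases x) (auto dest: injD)
  next
    assume "\<exists>u' v'. u = mv g u' \<and> v = mv g v' \<and> (e,u',v') \<in> D"
    then obtain u' v' where "u = mv g u'" "v = mv g v'" "(e,u',v') \<in> D" by blast
    then show "(me g e, u, v) \<in> ?F ` D" by (auto intro!: image_eqI[where x="(e,u',v')"])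
  qed
  have dir1: "(\<forall>e\<in>me g`?C. \<forall>u v. (e,u,v)\<in>?F`D1 \<longrightarrow> (e,u,v)\<in>?F`D2) \<longleftrightarrow> (\<forall>e\<in>?C. \<forall>u v. (e,u,v)\<in>D1 \<longrightarrow> (e,u,v)\<in>D2)" for D1 D2
  proof
    assume H: "\<forall>e\<in>me g`?C. \<forall>u v. (e,u,v)\<in>?F`D1 \<longrightarrow> (e,u,v)\<in>?F`D2"
    show "\<forall>e\<in>?C. \<forall>u v. (e,u,v)\<in>D1 \<longrightarrow> (e,u,v)\<in>D2"
    proof (intro ballI allI impI)
      fix e u v assume a: "e\<in>?C" "(e,u,v)\<in>D1"
      then have "(me g e, mv g u, mv g v) \<in> ?F`D1" by (intro image_eqI[where x="(e,u,v)"]) auto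
      with H a(1) have "(me g e, mv g u, mv g v) \<in> ?F`D2" by blast
      then show "(e,u,v)\<in>D2" unfolding mem by (auto simp: inj_eq[OF iv])
    qed
  next
    assume H: "\<forall>e\<in>?C. \<forall>u v. (e,u,v)\<in>D1 \<longrightarrow> (e,u,v)\<in>D2"
    show "\<forall>e\<in>me g`?C. \<forall>u v. (e,u,v)\<in>?F`D1 \<longrightarrow> (e,u,v)\<in>?F`D2"
    proof (intro ballI allI impI)
      fix e u v assume a: "e \<in> me g`?C" "(e,u,v) \<in> ?F`D1"
      then obtain e0 where e0: "e = me g e0" "e0\<in>?C" by auto
      with a(2) obtain u' v' where uv: "u = mv g u'" "v = mv g v'" "(e0,u',v')\<in>D1"
        using mem by blast
      then have "(e0,u',v') \<in> D2" using H e0(2) by blast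
      then show "(e,u,v) \<in> ?F`D2" using e0 uv by (auto intro!: image_eqI[where x="(e0,u',v')"])
    qed
  qed
  have dir2: "(\<forall>e\<in>me g`?C. \<forall>u v. (e,u,v)\<in>?F`D1 \<longrightarrow> (e,v,u)\<in>?F`D2) \<longleftrightarrow> (\<forall>e\<in>?C. \<forall>u v. (e,u,v)\<in>D1 \<longrightarrow> (e,v,u)\<in>D2)" for D1 D2
  proof
    assume H: "\<forall>e\<in>me g`?C. \<forall>u v. (e,u,v)\<in>?F`D1 \<longrightarrow> (e,v,u)\<in>?F`D2"
    show "\<forall>e\<in>?C. \<forall>u v. (e,u,v)\<in>D1 \<longrightarrow> (e,v,u)\<in>D2"
    proof (intro ballI allI impI)
      fix e u v assume a: "e\<in>?C" "(e,u,v)\<in>D1"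
      then have "(me g e, mv g u, mv g v) \<in> ?F`D1" by (intro image_eqI[where x="(e,u,v)"]) auto
      with H a(1) have "(me g e, mv g v, mv g u) \<in> ?F`D2" by blast
      then show "(e,v,u)\<in>D2" unfolding mem by (auto simp: inj_eq[OF iv])
    qed
  next
    assume H: "\<forall>e\<in>?C. \<forall>u v. (e,u,v)\<in>D1 \<longrightarrow> (e,v,u)\<in>D2"
    show "\<forall>e\<in>me g`?C. \<forall>u v. (e,u,v)\<in>?F`D1 \<longrightarrow> (e,v,u)\<in>?F`D2"
    proof (intro ballI allI impI)
      fix e u v assume a: "e \<in> me g`?C" "(e,u,v) \<in> ?F`D1"
      then obtain e0 where e0: "e = me g e0" "e0\<in>?C" by auto
      with a(2) obtain u' v' where uv: "u = mv g u'" "v = mv g v'" "(e0,u',v')\<in>D1"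
        using mem by blast
      then have "(e0,v',u') \<in> D2" using H e0(2) by blast
      then show "(e,v,u) \<in> ?F`D2" using e0 uv by (auto intro!: image_eqI[where x="(e0,v',u')"])
    qed
  qed
  have card: "card {f. (me g e, f) \<in> (common_adj (me g ` ?C))\<^sup>*} = card {f. (e, f) \<in> (common_adj ?C)\<^sup>*}" for e
  proof -
    have "{f. (me g e, f) \<in> (common_adj (me g ` ?C))\<^sup>*} = me g ` {f. (e, f) \<in> (common_adj ?C)\<^sup>*}"
      unfolding adj_map[OF inj] rtrancl_img[OF ie] by auto
    then show ?thesis using card_image[OF inj_on_subset[OF ie subset_UNIV]] by simp
  qed
  have card': "(\<forall>e\<in>me g`?C. odd (card {f. (e, f) \<in> (common_adj (me g`?C))\<^sup>*})) \<longleftrightarrow> (\<forall>e\<in>?C. odd (card {f. (e, f) \<in> (common_adj ?C)\<^sup>*}))"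
    using card by auto
  have ne: "(me g ` ?C \<noteq> {}) = (?C \<noteq> {})" by simp
  show ?thesis
    unfolding odd_intersection_def Let_def C dirs_map[OF l(1)] dirs_map[OF l(2)]
    apply (rule conj_cong[OF ne])
    apply (rule conj_cong)
     apply (rule arg_cong2[where f="(\<or>)", OF dir1 dir2])
    apply (rule card')
    done
qed

locale emb =
  fixes g :: "'b \<Rightarrow> 'c" and RIt :: "'b set" and RI :: "'c set"
    and Pt :: "'a \<Rightarrow> 'b \<Rightarrow> real" and Qt :: "'b \<Rightarrow> 'a \<Rightarrow> real"
    and P :: "'a \<Rightarrow> 'c \<Rightarrow> real" and Q :: "'c \<Rightarrow> 'a \<Rightarrow> real"
  assumes inj: "inj g" and RIeq: "\<And>r. r \<in> RIt \<longleftrightarrow> g r \<in> RI"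
    and Peq: "\<And>s r. Pt s r = P s (g r)" and Qeq: "\<And>s r. Qt r s = Q (g r) s"
begin

lemma sign_me: "edge_sign P Q (me g e) = edge_sign Pt Qt e"
  by (cases e) (auto simp: Peq Qeq)

lemma label_me: "edge_label P (me g e) = edge_label Pt e"
  by (cases e) (auto simp: Peq)

lemma edges_me: "me g e \<in> dsr_edges SI RI P Q \<longleftrightarrow> e \<in> dsr_edges SI RIt Pt Qt"
  by (cases e) (auto simp: dsr_edges_def Peq Qeq RIeq)

lemma cycle_map:
  "dsr_cycle SI RI P Q (map (mv g) vs) (map (me g) es) \<longleftrightarrow> dsr_cycle SI RIt Pt Qt vs es"
proof -
  have d1: "distinct (map (mv g) vs) = distinct vs"
    by (simp add: distinct_map inj_on_subset[OF inj_mv[OF inj] subset_UNIV])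
  have d2: "distinct (map (me g) es) = distinct es"
    by (simp add: distinct_map inj_on_subset[OF inj_me[OF inj] subset_UNIV])
  have s: "set (map (me g) es) \<subseteq> dsr_edges SI RI P Q \<longleftrightarrow> set es \<subseteq> dsr_edges SI RIt Pt Qt"
    using edges_me by auto
  show ?thesis
    unfolding dsr_cycle_def d1 d2 s
    by (auto simp: trav_me[OF inj])
qed

lemma parity_map: "cycle_parity P Q (map (me g) es) = cycle_parity Pt Qt es"
  by (simp add: cycle_parity_def o_def sign_me)

lemma scycle_map: "s_cycle P (map (me g) es) \<longleftrightarrow> s_cycle Pt es"
proof -
  have a: "(\<Prod>k \<in> {k. k < length es \<and> X k}. edge_label P (map (me g) es ! k))
          = (\<Prod>k \<in> {k. k < length es \<and> X k}. edge_label Pt (es ! k))" for X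
    by (rule prod.cong) (auto simp: label_me)
  show ?thesis unfolding s_cycle_def by (simp add: a label_me)
qed

lemma ecycle_map:
  "e_cycle SI RI P Q (map (mv g) vs) (map (me g) es) \<longleftrightarrow> e_cycle SI RIt Pt Qt vs es"
  by (simp add: e_cycle_def cycle_map parity_map)


lemma lift:
  assumes c: "dsr_cycle SI RI P Q vs es" and v: "set vs \<subseteq> range (mv g)"
  shows "\<exists>vs' es'. vs = map (mv g) vs' \<and> es = map (me g) es'"
proof -
  have L: "length vs = length es" "vs \<noteq> []" using c by (auto simp: dsr_cycle_def)
  have "\<forall>e\<in>set es. \<exists>x. e = me g x"
  proof
    fix e assume "e \<in> set es"
    then obtain k where k: "k < length es" "e = es ! k" by (auto simp: in_set_conv_nth)
    have t: "traverses e (vs ! k) (vs ! ((k+1) mod length vs))" using c k by (auto simp: dsr_cycle_def)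
    have "(k+1) mod length vs < length vs" using L by (metis length_greater_0_conv mod_less_divisor)
    then have "vs ! k \<in> range (mv g)" "vs ! ((k+1) mod length vs) \<in> range (mv g)"
      using v k L by auto
    then obtain u w where "vs ! k = mv g u" "vs ! ((k+1) mod length vs) = mv g w" by auto
    with t show "\<exists>x. e = me g x" using trav_img by metis
  qed
  moreover have "\<forall>v\<in>set vs. \<exists>x. v = mv g x" using v by auto
  ultimately show ?thesis by (metis ex_map_conv)
qed

lemma transfer:
  assumes H: "\<And>vs es. dsr_cycle SI RI P Q vs es \<Longrightarrow> set vs \<subseteq> range (mv g)"
  shows "dsr_steady SI RIt Pt Qt \<longleftrightarrow> dsr_steady SI RI P Q"
    and "dsr_odd SI RIt Pt Qt \<longleftrightarrow> dsr_odd SI RI P Q"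
    and "dsr_odd_star SI RIt Pt Qt \<longleftrightarrow> dsr_odd_star SI RI P Q"
proof -
  have lf: "\<exists>vs' es'. vs = map (mv g) vs' \<and> es = map (me g) es'" if "dsr_cycle SI RI P Q vs es" for vs es
    using lift[OF that H[OF that]] .
  have lfe: "\<exists>vs' es'. vs = map (mv g) vs' \<and> es = map (me g) es'" if "e_cycle SI RI P Q vs es" for vs es
    using that lf by (auto simp: e_cycle_def)
  show "dsr_steady SI RIt Pt Qt \<longleftrightarrow> dsr_steady SI RI P Q"
    unfolding dsr_steady_def
    by (metis cycle_map scycle_map lf)
  show "dsr_odd SI RIt Pt Qt \<longleftrightarrow> dsr_odd SI RI P Q"
    unfolding dsr_odd_def
    by (metis ecycle_map lfe)
  have len: "length vs = length es" if "e_cycle SI RIt Pt Qt vs es" for vs es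
    using that by (auto simp: e_cycle_def dsr_cycle_def)
  have P1: "(\<forall>vs es. e_cycle SI RIt Pt Qt vs es \<longrightarrow> s_cycle Pt es) \<longleftrightarrow>
            (\<forall>vs es. e_cycle SI RI P Q vs es \<longrightarrow> s_cycle P es)"
    by (metis ecycle_map scycle_map lfe)
  have P2: "(\<forall>vs1 es1 vs2 es2. e_cycle SI RIt Pt Qt vs1 es1 \<and> e_cycle SI RIt Pt Qt vs2 es2
        \<longrightarrow> \<not> odd_intersection vs1 es1 vs2 es2) \<longleftrightarrow>
       (\<forall>vs1 es1 vs2 es2. e_cycle SI RI P Q vs1 es1 \<and> e_cycle SI RI P Q vs2 es2
        \<longrightarrow> \<not> odd_intersection vs1 es1 vs2 es2)"
  proof
    assume A: "\<forall>vs1 es1 vs2 es2. e_cycle SI RIt Pt Qt vs1 es1 \<and> e_cycle SI RIt Pt Qt vs2 es2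
        \<longrightarrow> \<not> odd_intersection vs1 es1 vs2 es2"
    show "\<forall>vs1 es1 vs2 es2. e_cycle SI RI P Q vs1 es1 \<and> e_cycle SI RI P Q vs2 es2
        \<longrightarrow> \<not> odd_intersection vs1 es1 vs2 es2"
    proof (intro allI impI)
      fix vs1 es1 vs2 es2 assume B: "e_cycle SI RI P Q vs1 es1 \<and> e_cycle SI RI P Q vs2 es2"
      then obtain a1 b1 a2 b2 where ab: "vs1 = map (mv g) a1" "es1 = map (me g) b1"
        "vs2 = map (mv g) a2" "es2 = map (me g) b2" using lfe by metis
      have c: "e_cycle SI RIt Pt Qt a1 b1" "e_cycle SI RIt Pt Qt a2 b2" using B ab ecycle_map by auto
      show "\<not> odd_intersection vs1 es1 vs2 es2"
        unfolding ab oi_map[OF inj len[OF c(1)] len[OF c(2)]] using A c by blast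
    qed
  next
    assume A: "\<forall>vs1 es1 vs2 es2. e_cycle SI RI P Q vs1 es1 \<and> e_cycle SI RI P Q vs2 es2
        \<longrightarrow> \<not> odd_intersection vs1 es1 vs2 es2"
    show "\<forall>vs1 es1 vs2 es2. e_cycle SI RIt Pt Qt vs1 es1 \<and> e_cycle SI RIt Pt Qt vs2 es2
        \<longrightarrow> \<not> odd_intersection vs1 es1 vs2 es2"
    proof (intro allI impI)
      fix vs1 es1 vs2 es2 assume B: "e_cycle SI RIt Pt Qt vs1 es1 \<and> e_cycle SI RIt Pt Qt vs2 es2"
      then have c: "e_cycle SI RI P Q (map (mv g) vs1) (map (me g) es1)"
        "e_cycle SI RI P Q (map (mv g) vs2) (map (me g) es2)" using ecycle_map by auto
      show "\<not> odd_intersection vs1 es1 vs2 es2"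
        using A c oi_map[OF inj len[of vs1 es1] len[of vs2 es2]] B by blast
    qed
  qed
  show "dsr_odd_star SI RIt Pt Qt \<longleftrightarrow> dsr_odd_star SI RI P Q"
    unfolding dsr_odd_star_def using P1 P2 by blast
qed

end

definition gk :: "nat \<Rightarrow> nat \<times> nat \<Rightarrow> nat \<times> nat" where
  "gk k = (\<lambda>(a,b). (if a < k then a else Suc a, b))"

lemma emb_inst:
  assumes "k < m"
  shows "emb (gk k) (R2 n (m - 1)) (R2 n m) (Lupper (del_col k A)) (Llower (mtranspose (del_col k A)))
     (Lupper A) (Llower (mtranspose A))"
proof
  show "inj (gk k)" unfolding inj_def gk_def by auto
  show "r \<in> R2 n (m - 1) \<longleftrightarrow> gk k r \<in> R2 n m" for r
    using assms by (cases r) (auto simp: R2_def gk_def)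
  show "Lupper (del_col k A) s r = Lupper A s (gk k r)" for s r
    by (cases s; cases r) (auto simp: Lupper_def del_col_def gk_def)
  show "Llower (mtranspose (del_col k A)) r s = Llower (mtranspose A) (gk k r) s" for s r
    by (cases s; cases r) (auto simp: Llower_def del_col_def gk_def mtranspose_def)
qed



lemma PQ_sym: "Llower (mtranspose A) r s = Lupper A s r"
  by (cases s; cases r) (auto simp: Lupper_def Llower_def mtranspose_def)

lemma edges_UE:
  assumes "e \<in> dsr_edges (S2 n) RI (Lupper A) (Llower (mtranspose A))"
  shows "\<exists>s r. e = UE s r \<and> s \<in> S2 n \<and> Lupper A s r \<noteq> 0"
  using assms unfolding dsr_edges_def PQ_sym by auto

lemma uniq:
  assumes p: "{i. i < n \<and> A i k \<noteq> 0} = {p}"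
    and s: "s \<in> S2 n" and nz: "Lupper A s (k, l) \<noteq> 0"
  shows "s = (min l p, max l p)"
proof -
  obtain a b where ab: "s = (a,b)" by (cases s)
  have pp: "x = p" if "x < n" "A x k \<noteq> 0" for x
    using p that by blast
  from s ab have "a < b" "b < n" "a < n" by (auto simp: S2_def)
  with nz ab pp[of a] pp[of b] show ?thesis by (auto simp: Lupper_def split: if_splits)
qed

lemma no_col_k:
  assumes p: "{i. i < n \<and> A i k \<noteq> 0} = {p}"
    and c: "dsr_cycle (S2 n) (R2 n m) (Lupper A) (Llower (mtranspose A)) vs es"
  shows "RV (k,l) \<notin> set vs"
proof
  assume "RV (k,l) \<in> set vs"
  then obtain i where i: "i < length vs" "vs ! i = RV (k,l)" by (auto simp: in_set_conv_nth)
  define L where "L = length vs"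
  have L: "length es = L" "L > 0" using c i unfolding L_def dsr_cycle_def by auto
  define j where "j = (if i = 0 then L - 1 else i - 1)"
  have j: "j < L" "(j + 1) mod L = i" using i L unfolding j_def L_def by auto
  have tr: "\<And>q. q < L \<Longrightarrow> traverses (es ! q) (vs ! q) (vs ! ((q + 1) mod L))"
    using c L unfolding dsr_cycle_def L_def by auto
  have ed: "\<And>q. q < L \<Longrightarrow> es ! q \<in> dsr_edges (S2 n) (R2 n m) (Lupper A) (Llower (mtranspose A))"
    using c L unfolding dsr_cycle_def by (metis nth_mem subsetD)
  obtain s1 r1 where e1: "es ! i = UE s1 r1" "s1 \<in> S2 n" "Lupper A s1 r1 \<noteq> 0"
    using edges_UE[OF ed[of i]] i L L_def by auto
  obtain s2 r2 where e2: "es ! j = UE s2 r2" "s2 \<in> S2 n" "Lupper A s2 r2 \<noteq> 0"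
    using edges_UE[OF ed[of j]] j by auto
  have t1: "traverses (es ! i) (vs ! i) (vs ! ((i + 1) mod L))" using tr[of i] i(1) unfolding L_def by blast
  have t2: "traverses (es ! j) (vs ! j) (vs ! i)" using tr[OF j(1)] j(2) by simp
  have r1: "r1 = (k,l)" using t1 e1(1) i(2) by auto
  have r2: "r2 = (k,l)" using t2 e2(1) i(2) by auto
  have "s1 = (min l p, max l p)"
    using uniq[where n=n and A=A and k=k and p=p and l=l and s=s1] p e1(2,3) r1 by simp
  moreover have "s2 = (min l p, max l p)"
    using uniq[where n=n and A=A and k=k and p=p and l=l and s=s2] p e2(2,3) r2 by simp
  ultimately have "s1 = s2" by simp
  then have "es ! i = es ! j" using e1 e2 r1 r2 by simp
  moreover have "distinct es" using c by (simp add: dsr_cycle_def)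
  ultimately have "i = j" using i j L L_def by (simp add: nth_eq_iff_index_eq)
  then have "L = 1" "i = 0" using j_def L(2) by (auto split: if_splits)
  then show False using t1 e1(1) i(2) by simp
qed

lemma H_inst:
  assumes p: "{i. i < n \<and> A i k \<noteq> 0} = {p}"
    and c: "dsr_cycle (S2 n) (R2 n m) (Lupper A) (Llower (mtranspose A)) vs es"
  shows "set vs \<subseteq> range (mv (gk k))"
proof
  fix v assume v: "v \<in> set vs"
  show "v \<in> range (mv (gk k))"
  proof (cases v)
    case (SV s)
    then have "v = mv (gk k) (SV s)" by simp
    then show ?thesis by blast
  next
    case (RV r)
    obtain a b where r: "r = (a,b)" by (cases r)
    have "a \<noteq> k" using no_col_k[OF p c, of b] v RV r by auto
    then have "v = mv (gk k) (RV (if a < k then a else a - 1, b))"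
      using RV r by (auto simp: gk_def)
    then show ?thesis by blast
  qed
qed

theorem lemma5p1:
  fixes n m k :: nat and A :: "nat \<Rightarrow> nat \<Rightarrow> real"
  assumes "n \<ge> 2" and "m \<ge> 2" and "k < m"
    and "card {i. i < n \<and> A i k \<noteq> 0} = 1"
  shows "(dsr2_odd_star n (m - 1) (del_col k A) (mtranspose (del_col k A))
            \<longleftrightarrow> dsr2_odd_star n m A (mtranspose A))
       \<and> (dsr2_odd n (m - 1) (del_col k A) (mtranspose (del_col k A))
            \<longleftrightarrow> dsr2_odd n m A (mtranspose A))
       \<and> (dsr2_steady n (m - 1) (del_col k A) (mtranspose (del_col k A))
            \<longleftrightarrow> dsr2_steady n m A (mtranspose A))"
proof -
  obtain p where p: "{i. i < n \<and> A i k \<noteq> 0} = {p}" using assms(4) card_1_singletonE by blast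
  interpret emb "gk k" "R2 n (m - 1)" "R2 n m" "Lupper (del_col k A)" "Llower (mtranspose (del_col k A))"
     "Lupper A" "Llower (mtranspose A)"
    by (rule emb_inst[OF assms(3)])
  have H: "\<And>vs es. dsr_cycle (S2 n) (R2 n m) (Lupper A) (Llower (mtranspose A)) vs es \<Longrightarrow> set vs \<subseteq> range (mv (gk k))"
    using H_inst[where n=n and A=A and k=k and p=p and m=m, OF p] by blast
  have T1: "dsr_steady (S2 n) (R2 n (m - 1)) (Lupper (del_col k A)) (Llower (mtranspose (del_col k A)))
     \<longleftrightarrow> dsr_steady (S2 n) (R2 n m) (Lupper A) (Llower (mtranspose A))"
    by (rule transfer(1), erule H)
  have T2: "dsr_odd (S2 n) (R2 n (m - 1)) (Lupper (del_col k A)) (Llower (mtranspose (del_col k A)))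
     \<longleftrightarrow> dsr_odd (S2 n) (R2 n m) (Lupper A) (Llower (mtranspose A))"
    by (rule transfer(2), erule H)
  have T3: "dsr_odd_star (S2 n) (R2 n (m - 1)) (Lupper (del_col k A)) (Llower (mtranspose (del_col k A)))
     \<longleftrightarrow> dsr_odd_star (S2 n) (R2 n m) (Lupper A) (Llower (mtranspose A))"
    by (rule transfer(3), erule H)
  show ?thesis
    unfolding dsr2_odd_star_def dsr2_odd_def dsr2_steady_def
    using T1 T2 T3 by blast
qed

end
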